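(* With the notation of the context, consider: (i) $v\sim_h1$ in $\mathcal U(A)$; (ii) $p\sim\mathrm{diag}(1_A,0)$ (Murray–von Neumann equivalence) in $C(\mathbb T,M_2(A))$; (iii) the $C(\mathbb T)$-algebra $\mathcal B=p\,C(\mathbb T,M_2(A))\,p$ is properly infinite. Then (i) and (ii) are equivalent for every unital $C^*$-algebra $A$, and if $A$ is in addition properly infinite then (i), (ii), (iii) are all equivalent.
   Context: Let $A$ be a unital $C^*$-algebra and $v\in A$ a unitary such that $\mathrm{diag}(v,1)$ is homotopic to $1$ in $\mathcal U(M_2(A))$. Let $t\mapsto u_t$, $t\in[0,1]$, be a continuous path of unitaries in $M_2(A)$ with $u_0=1$, $u_1=\mathrm{diag}(v,1)$, and put $p(t)=u_t\,\mathrm{diag}(1,0)\,u_t^*$. Identifying $C(\mathbb T,D)$ with continuous $f\colon[0,1]\to D$ with $f(0)=f(1)$, $p$ is a projection in $C(\mathbb T,M_2(A))$; $\mathcal B=pC(\mathbb T,M_2(A))p$ is a unital $C(\mathbb T)$-algebra with fibres $p(t)M_2(A)p(t)\cong A$. A unital $C^*$-algebra is properly infinite if there are mutually orthogonal projections $e,f$ with $e\sim1\sim f$. $v\sim_h1$ means $v$ is connected to $1$ by a continuous path of unitaries. *)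

theory Defs
  imports Complex_Main
begin

class cstar_algebra = real_normed_algebra_1 + banach +
  fixes cscale :: "complex \<Rightarrow> 'a \<Rightarrow> 'a"
    and cstar :: "'a \<Rightarrow> 'a"
  assumes cscale_add_right: "cscale c (x + y) = cscale c x + cscale c y"
    and cscale_add_left: "cscale (b + c) x = cscale b x + cscale c x"
    and cscale_cscale: "cscale b (cscale c x) = cscale (b * c) x"
    and cscale_of_real: "cscale (complex_of_real r) x = scaleR r x"
    and mult_cscale_left: "cscale c x * y = cscale c (x * y)"
    and mult_cscale_right: "x * cscale c y = cscale c (x * y)"
    and norm_cscale: "norm (cscale c x) = cmod c * norm x"
    and cstar_cstar: "cstar (cstar x) = x"
    and cstar_add: "cstar (x + y) = cstar x + cstar y"
    and cstar_cscale: "cstar (cscale c x) = cscale (cnj c) (cstar x)"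
    and cstar_mult: "cstar (x * y) = cstar y * cstar x"
    and cstar_identity: "norm (cstar x * x) = norm x * norm x"

definition unitary :: "'a::cstar_algebra \<Rightarrow> bool" where
  "unitary x \<longleftrightarrow> cstar x * x = 1 \<and> x * cstar x = 1"

definition is_proj :: "'a::cstar_algebra \<Rightarrow> bool" where
  "is_proj e \<longleftrightarrow> cstar e = e \<and> e * e = e"

definition mvn :: "'a::cstar_algebra \<Rightarrow> 'a \<Rightarrow> bool" where
  "mvn e f \<longleftrightarrow> (\<exists>w. cstar w * w = e \<and> w * cstar w = f)"

definition properly_infinite :: "'a::cstar_algebra itself \<Rightarrow> bool" where
  "properly_infinite _ \<longleftrightarrow>
     (\<exists>e f :: 'a. is_proj e \<and> is_proj f \<and> e * f = 0 \<and> mvn e 1 \<and> mvn f 1)"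

definition homotopic_to_one :: "'a::cstar_algebra \<Rightarrow> bool" where
  "homotopic_to_one v \<longleftrightarrow>
     (\<exists>\<gamma> :: real \<Rightarrow> 'a. continuous_on {0..1} \<gamma> \<and> (\<forall>t\<in>{0..1}. unitary (\<gamma> t))
        \<and> \<gamma> 0 = v \<and> \<gamma> 1 = 1)"

datatype 'a m2 = M2 (e11: 'a) (e12: 'a) (e21: 'a) (e22: 'a)

fun m2_mult :: "'a::cstar_algebra m2 \<Rightarrow> 'a m2 \<Rightarrow> 'a m2" where
  "m2_mult (M2 a b c d) (M2 e f g h) =
     M2 (a*e + b*g) (a*f + b*h) (c*e + d*g) (c*f + d*h)"

fun m2_star :: "'a::cstar_algebra m2 \<Rightarrow> 'a m2" where
  "m2_star (M2 a b c d) = M2 (cstar a) (cstar c) (cstar b) (cstar d)"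

definition diag :: "'a::cstar_algebra \<Rightarrow> 'a \<Rightarrow> 'a m2" where
  "diag x y = M2 x 0 0 y"

definition m2_one :: "'a::cstar_algebra m2" where
  "m2_one = diag 1 1"

definition m2_zero :: "'a::cstar_algebra m2" where
  "m2_zero = diag 0 0"

definition m2_unitary :: "'a::cstar_algebra m2 \<Rightarrow> bool" where
  "m2_unitary x \<longleftrightarrow> m2_mult (m2_star x) x = m2_one \<and> m2_mult x (m2_star x) = m2_one"

text \<open>Continuity of an M_2(A)-valued map: the C*-norm topology on M_2(A) is the
  product (entrywise) topology.\<close>
definition m2_cont :: "real set \<Rightarrow> (real \<Rightarrow> 'a::cstar_algebra m2) \<Rightarrow> bool" where
  "m2_cont S f \<longleftrightarrow> continuous_on S (\<lambda>t. e11 (f t)) \<and> continuous_on S (\<lambda>t. e12 (f t))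
      \<and> continuous_on S (\<lambda>t. e21 (f t)) \<and> continuous_on S (\<lambda>t. e22 (f t))"

section \<open>C(T, M_2(A)) as continuous f on [0,1] with f 0 = f 1\<close>

text \<open>Elements are functions real => M_2(A); only their values on [0,1] matter,
  so all identities below are stated pointwise on [0,1].\<close>
definition in_CT :: "(real \<Rightarrow> 'a::cstar_algebra m2) \<Rightarrow> bool" where
  "in_CT f \<longleftrightarrow> m2_cont {0..1} f \<and> f 0 = f 1"

definition mvn_CT :: "(real \<Rightarrow> 'a::cstar_algebra m2) \<Rightarrow> (real \<Rightarrow> 'a m2) \<Rightarrow> bool" where
  "mvn_CT p q \<longleftrightarrow> (\<exists>w. in_CT w \<and> (\<forall>t\<in>{0..1}.
      m2_mult (m2_star (w t)) (w t) = p t \<and> m2_mult (w t) (m2_star (w t)) = q t))"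

definition in_corner :: "(real \<Rightarrow> 'a::cstar_algebra m2) \<Rightarrow> (real \<Rightarrow> 'a m2) \<Rightarrow> bool" where
  "in_corner p x \<longleftrightarrow> in_CT x \<and> (\<forall>t\<in>{0..1}. m2_mult (m2_mult (p t) (x t)) (p t) = x t)"

definition proj_corner :: "(real \<Rightarrow> 'a::cstar_algebra m2) \<Rightarrow> (real \<Rightarrow> 'a m2) \<Rightarrow> bool" where
  "proj_corner p e \<longleftrightarrow> in_corner p e \<and>
     (\<forall>t\<in>{0..1}. m2_star (e t) = e t \<and> m2_mult (e t) (e t) = e t)"

definition mvn_corner :: "(real \<Rightarrow> 'a::cstar_algebra m2) \<Rightarrow> (real \<Rightarrow> 'a m2) \<Rightarrow> (real \<Rightarrow> 'a m2) \<Rightarrow> bool" where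
  "mvn_corner p e f \<longleftrightarrow> (\<exists>w. in_corner p w \<and> (\<forall>t\<in>{0..1}.
      m2_mult (m2_star (w t)) (w t) = e t \<and> m2_mult (w t) (m2_star (w t)) = f t))"

definition properly_infinite_corner :: "(real \<Rightarrow> 'a::cstar_algebra m2) \<Rightarrow> bool" where
  "properly_infinite_corner p \<longleftrightarrow>
     (\<exists>e f. proj_corner p e \<and> proj_corner p f
        \<and> (\<forall>t\<in>{0..1}. m2_mult (e t) (f t) = m2_zero)
        \<and> mvn_corner p e p \<and> mvn_corner p f p)"

end

theory Submission
  imports Defs
begin

lemma cstar_one[simp]: "cstar (1::'a::cstar_algebra) = 1"
proof -
  have "cstar (cstar (1::'a) * 1) = cstar 1 * cstar (cstar 1)" by (rule cstar_mult)
  thus ?thesis by (simp add: cstar_cstar)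
qed

lemma cstar_zero[simp]: "cstar (0::'a::cstar_algebra) = 0"
proof -
  have "cstar (0 + 0::'a) = cstar 0 + cstar 0" by (rule cstar_add)
  thus ?thesis by simp
qed

lemma cstar_minus[simp]: "cstar (- x::'a::cstar_algebra) = - cstar x"
proof -
  have "cstar (x + - x) = cstar x + cstar (-x)" by (rule cstar_add)
  hence "cstar x + cstar (-x) = 0" by simp
  hence "- cstar x = cstar (-x)" by (simp only: neg_eq_iff_add_eq_0)
  thus ?thesis by simp
qed

lemma cstar_diff[simp]: "cstar (x - y::'a::cstar_algebra) = cstar x - cstar y"
  using cstar_add[of x "-y"] by simp

lemma cstar_scaleR: "cstar (scaleR r x::'a::cstar_algebra) = scaleR r (cstar x)"
proof -
  have "cstar (scaleR r x) = cstar (cscale (complex_of_real r) x)" by (simp add: cscale_of_real)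
  also have "\<dots> = cscale (complex_of_real r) (cstar x)" by (simp add: cstar_cscale)
  finally show ?thesis by (simp add: cscale_of_real)
qed

lemma norm_cstar[simp]: "norm (cstar x::'a::cstar_algebra) = norm x"
proof -
  have le: "norm y \<le> norm (cstar y)" for y :: 'a
  proof (cases "y = 0")
    case True thus ?thesis by simp
  next
    case False
    have "norm y * norm y = norm (cstar y * y)" by (simp add: cstar_identity)
    also have "\<dots> \<le> norm (cstar y) * norm y" by (rule norm_mult_ineq)
    finally show ?thesis using False by simp
  qed
  show ?thesis using le[of x] le[of "cstar x"] by (simp add: cstar_cstar)
qed

lemma bounded_linear_cstar: "bounded_linear (cstar :: 'a::cstar_algebra \<Rightarrow> 'a)"
  by (rule bounded_linear_intro[where K=1]) (auto simp: cstar_add cstar_scaleR)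

lemma continuous_on_cstar[continuous_intros]:
  "continuous_on S f \<Longrightarrow> continuous_on S (\<lambda>t. cstar (f t::'a::cstar_algebra))"
  using bounded_linear.continuous_on[OF bounded_linear_cstar] .

lemma cstar_self_zero: "cstar x * x = 0 \<Longrightarrow> (x::'a::cstar_algebra) = 0"
proof -
  assume "cstar x * x = 0"
  hence "norm x * norm x = 0" using cstar_identity[of x] by simp
  thus ?thesis by simp
qed

lemma cstar_self_zero': "x * cstar x = 0 \<Longrightarrow> (x::'a::cstar_algebra) = 0"
proof -
  assume "x * cstar x = 0"
  hence "cstar (cstar x) * cstar x = 0" by (simp add: cstar_cstar)
  hence "cstar x = 0" by (rule cstar_self_zero)
  thus ?thesis by (metis cstar_cstar cstar_zero)
qed

lemma m2_mult_assoc: "m2_mult (m2_mult x y) z = m2_mult x (m2_mult y z)"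
  by (cases x; cases y; cases z) (simp add: algebra_simps)

lemma m2_star_mult: "m2_star (m2_mult x y) = m2_mult (m2_star y) (m2_star x)"
  by (cases x; cases y) (simp add: cstar_add cstar_mult add.commute)

lemma m2_star_star[simp]: "m2_star (m2_star x) = x"
  by (cases x) (simp add: cstar_cstar)

lemma m2_one_mult[simp]: "m2_mult m2_one x = x"
  by (cases x, simp add: m2_one_def diag_def)

lemma m2_mult_one[simp]: "m2_mult x m2_one = x"
  by (cases x, simp add: m2_one_def diag_def)

lemma m2_star_one[simp]: "m2_star m2_one = m2_one"
  by (simp add: m2_one_def diag_def)

lemma m2_mult_eq: "m2_mult x y = M2 (e11 x * e11 y + e12 x * e21 y) (e11 x * e12 y + e12 x * e22 y)
     (e21 x * e11 y + e22 x * e21 y) (e21 x * e12 y + e22 x * e22 y)"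
  by (cases x; cases y) simp

lemma m2_star_eq: "m2_star x = M2 (cstar (e11 x)) (cstar (e21 x)) (cstar (e12 x)) (cstar (e22 x))"
  by (cases x) simp

lemma m2_cont_mult: "m2_cont S f \<Longrightarrow> m2_cont S g \<Longrightarrow> m2_cont S (\<lambda>t. m2_mult (f t) (g t))"
  unfolding m2_cont_def m2_mult_eq m2.sel
  by (intro conjI continuous_on_add continuous_on_mult; simp)

lemma m2_cont_star: "m2_cont S f \<Longrightarrow> m2_cont S (\<lambda>t. m2_star (f t))"
  unfolding m2_cont_def m2_star_eq m2.sel
  by (intro conjI continuous_on_cstar; simp)

lemma m2_cont_const: "m2_cont S (\<lambda>t. c)"
  by (simp add: m2_cont_def)

lemma m2_cont_M2: "continuous_on S a \<Longrightarrow> continuous_on S b \<Longrightarrow> continuous_on S c \<Longrightarrow> continuous_on S d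
  \<Longrightarrow> m2_cont S (\<lambda>t. M2 (a t) (b t) (c t) (d t))"
  by (simp add: m2_cont_def)

lemma ra: "x * y = w \<Longrightarrow> x * (y * z) = w * (z::'a::ring)"
  by (simp add: mult.assoc[symmetric])

definition "Wf a b c d s1 s2 r1 r2 =
  (let h = a * cstar s1 + b * cstar s2; k = s2 * cstar h; m = r1 * a + r2 * c;
       tt = 1 - s1 * cstar s1 - k * cstar k;
       Yq = a * cstar s1 + b * cstar k; Yr = c * cstar s1 + d * cstar k;
       Zq = m * s1 * cstar m + 1 - m * cstar m
   in Zq * Yq + m * k * Yr + m * tt)"

lemma Wf_unitary:
  fixes a b c d s1 s2 r1 r2 :: "'a::cstar_algebra"
  assumes U1: "cstar a * a + cstar c * c = 1"
    and U2: "cstar a * b + cstar c * d = 0"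
    and U4: "cstar b * b + cstar d * d = 1"
    and V1: "a * cstar a + b * cstar b = 1"
    and V2: "a * cstar c + b * cstar d = 0"
    and V4: "c * cstar c + d * cstar d = 1"
    and S1: "cstar s1 * s1 = 1" and S2: "cstar s2 * s2 = 1" and S12: "cstar s1 * s2 = 0"
    and R1: "cstar r1 * r1 = 1" and R2: "cstar r2 * r2 = 1" and R12: "cstar r1 * r2 = 0"
  shows "unitary (Wf a b c d s1 s2 r1 r2)"
proof -
  note cs = cstar_add cstar_mult cstar_cstar cstar_diff
  have U3: "cstar b * a + cstar d * c = 0" using arg_cong[OF U2, of cstar] by (simp add: cs)
  have V3: "c * cstar a + d * cstar b = 0" using arg_cong[OF V2, of cstar] by (simp add: cs)
  have S21: "cstar s2 * s1 = 0" using arg_cong[OF S12, of cstar] by (simp add: cs)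
  have R21: "cstar r2 * r1 = 0" using arg_cong[OF R12, of cstar] by (simp add: cs)
  define h where "h = a * cstar s1 + b * cstar s2"
  define k where "k = s2 * cstar h"
  define m where "m = r1 * a + r2 * c"
  define tt where "tt = 1 - s1 * cstar s1 - k * cstar k"
  define Yq where "Yq = a * cstar s1 + b * cstar k"
  define Yr where "Yr = c * cstar s1 + d * cstar k"
  define Zq where "Zq = m * s1 * cstar m + 1 - m * cstar m"
  have W: "Wf a b c d s1 s2 r1 r2 = Zq * Yq + m * k * Yr + m * tt"
    by (simp add: Wf_def Let_def h_def k_def m_def tt_def Yq_def Yr_def Zq_def)
  note base = S1 S2 S12 S21 R1 R2 R12 R21 ra[OF S1] ra[OF S2] ra[OF S12] ra[OF S21]
    ra[OF R1] ra[OF R2] ra[OF R12] ra[OF R21]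
  have F1: "h * cstar h = 1"
  proof -
    have "h * cstar h = a * cstar a + b * cstar b"
      by (simp add: h_def cs algebra_simps base)
    thus ?thesis using V1 by simp
  qed
  have F2: "cstar k * k = 1"
    by (simp add: k_def cs mult.assoc ra[OF S2] F1)
  have F3: "cstar s1 * k = 0" by (simp add: k_def ra[OF S12])
  have F3': "cstar k * s1 = 0" using arg_cong[OF F3, of cstar] by (simp add: cs)
  have F4: "cstar m * m = 1"
  proof -
    have "cstar m * m = cstar a * a + cstar c * c"
      by (simp add: m_def cs algebra_simps base)
    thus ?thesis using U1 by simp
  qed
  note base2 = F1 F2 F3 F3' F4 ra[OF F1] ra[OF F2] ra[OF F3] ra[OF F3'] ra[OF F4]
  have tts: "cstar tt = tt" by (simp add: tt_def cs)
  have F5: "cstar s1 * tt = 0" by (simp add: tt_def algebra_simps base base2)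
  have F6: "cstar k * tt = 0" by (simp add: tt_def algebra_simps base base2)
  have F5': "tt * s1 = 0" using arg_cong[OF F5, of cstar] by (simp add: cs tts)
  have F6': "tt * k = 0" using arg_cong[OF F6, of cstar] by (simp add: cs tts)
  have F7: "tt * tt = tt" by (simp add: tt_def algebra_simps base base2)
  note base3 = F5 F6 F5' F6' F7 ra[OF F5] ra[OF F6] ra[OF F5'] ra[OF F6'] ra[OF F7]
  have Y1: "Yq * cstar Yq = 1"
  proof -
    have "Yq * cstar Yq = a * cstar a + b * cstar b"
      by (simp add: Yq_def cs algebra_simps base base2)
    thus ?thesis using V1 by simp
  qed
  have Y2: "Yr * cstar Yr = 1"
  proof -
    have "Yr * cstar Yr = c * cstar c + d * cstar d"
      by (simp add: Yr_def cs algebra_simps base base2)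
    thus ?thesis using V4 by simp
  qed
  have Y3: "Yq * cstar Yr = 0"
  proof -
    have "Yq * cstar Yr = a * cstar c + b * cstar d"
      by (simp add: Yq_def Yr_def cs algebra_simps base base2)
    thus ?thesis using V2 by simp
  qed
  have Y4: "Yr * cstar Yq = 0" using arg_cong[OF Y3, of cstar] by (simp add: cs)
  have Y5: "Yq * tt = 0" by (simp add: Yq_def algebra_simps base3)
  have Y6: "Yr * tt = 0" by (simp add: Yr_def algebra_simps base3)
  have Y5': "tt * cstar Yq = 0" using arg_cong[OF Y5, of cstar] by (simp add: cs tts)
  have Y6': "tt * cstar Yr = 0" using arg_cong[OF Y6, of cstar] by (simp add: cs tts)
  have Y7: "cstar Yq * Yq + cstar Yr * Yr + tt = 1"
  proof -
    have "cstar Yq * Yq + cstar Yr * Yr = s1 * (cstar a * a + cstar c * c) * cstar s1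
       + s1 * (cstar a * b + cstar c * d) * cstar k + k * (cstar b * a + cstar d * c) * cstar s1
       + k * (cstar b * b + cstar d * d) * cstar k"
      by (simp add: Yq_def Yr_def cs algebra_simps)
    also have "\<dots> = s1 * cstar s1 + k * cstar k" by (simp add: U1 U2 U3 U4)
    finally show ?thesis by (simp add: tt_def)
  qed
  have Z1: "cstar m * (1 - m * cstar m) = 0" by (simp add: algebra_simps base2)
  have Z2: "cstar Zq * Zq = 1"
    by (simp add: Zq_def cs algebra_simps base base2)
  have Z3: "cstar Zq * m = m * cstar s1"
    by (simp add: Zq_def cs algebra_simps base base2)
  have Z3': "cstar m * Zq = s1 * cstar m"  using arg_cong[OF Z3, of cstar] by (simp add: cs)
  have Z4: "Zq * cstar Zq = m * s1 * cstar s1 * cstar m + 1 - m * cstar m"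
    by (simp add: Zq_def cs algebra_simps base base2)
  note base4 = Y1 Y2 Y3 Y4 Y5 Y6 Y5' Y6' Z2 Z3 Z3' ra[OF Y1] ra[OF Y2] ra[OF Y3] ra[OF Y4] ra[OF Y5]
    ra[OF Y6] ra[OF Y5'] ra[OF Y6'] ra[OF Z2] ra[OF Z3] ra[OF Z3']
  have WW1: "cstar (Wf a b c d s1 s2 r1 r2) * Wf a b c d s1 s2 r1 r2 = 1"
  proof -
    have "cstar (Wf a b c d s1 s2 r1 r2) * Wf a b c d s1 s2 r1 r2
       = cstar Yq * Yq + cstar Yr * Yr + tt"
      unfolding W by (simp add: cs tts algebra_simps base base2 base3 base4)
    thus ?thesis using Y7 by simp
  qed
  have WW2: "Wf a b c d s1 s2 r1 r2 * cstar (Wf a b c d s1 s2 r1 r2) = 1"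
  proof -
    have "Wf a b c d s1 s2 r1 r2 * cstar (Wf a b c d s1 s2 r1 r2)
       = Zq * cstar Zq + m * k * cstar k * cstar m + m * tt * cstar m"
      unfolding W by (simp add: cs tts algebra_simps base base2 base3 base4)
    also have "\<dots> = 1" unfolding Z4 tt_def by (simp add: algebra_simps)
    finally show ?thesis .
  qed
  show ?thesis using WW1 WW2 by (simp add: unitary_def)
qed

lemma Wf_boundary:
  fixes v S1 S2 r1 r2 :: "'a::cstar_algebra"
  assumes v1: "cstar v * v = 1" and v2: "v * cstar v = 1"
  shows "Wf v 0 0 1 (cstar v * S1 * v) (cstar v * S2 * v) r1 r2 = Wf 1 0 0 1 S1 S2 r1 r2 * v"
  by (simp add: Wf_def Let_def cstar_mult cstar_cstar algebra_simps v1 v2 ra[OF v1] ra[OF v2])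

abbreviation D :: "'a::cstar_algebra \<Rightarrow> 'a m2" where "D y \<equiv> M2 y 0 0 0"

lemma ra2: "m2_mult x y = w \<Longrightarrow> m2_mult x (m2_mult y z) = m2_mult w z"
  by (simp add: m2_mult_assoc[symmetric])

lemma diag10: "diag (1::'a::cstar_algebra) 0 = D 1" by (simp add: diag_def)

lemma DD[simp]: "m2_mult (D x) (D y) = D (x * y)" by simp

lemma D_star[simp]: "m2_star (D x) = D (cstar x)" by simp

lemma m2_unitary_entries:
  assumes "m2_unitary (M2 a b c d)"
  shows "cstar a * a + cstar c * c = 1" "cstar a * b + cstar c * d = 0"
    "cstar b * b + cstar d * d = 1" "a * cstar a + b * cstar b = 1"
    "a * cstar c + b * cstar d = 0" "c * cstar c + d * cstar d = 1"
  using assms by (simp_all add: m2_unitary_def m2_one_def diag_def)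

lemma m2_unitaryD:
  assumes "m2_unitary U"
  shows "m2_mult (m2_star U) U = m2_one" "m2_mult U (m2_star U) = m2_one"
    "m2_mult (m2_star U) (m2_mult U z) = z" "m2_mult U (m2_mult (m2_star U) z) = z"
  using assms by (auto simp: m2_unitary_def m2_mult_assoc[symmetric])

lemma corner_diag:
  assumes U: "m2_unitary U"
    and X: "m2_mult (m2_mult P X) P = X"
    and P: "P = m2_mult (m2_mult U (D 1)) (m2_star U)"
  shows "m2_mult (m2_mult (m2_star U) X) U = D (e11 (m2_mult (m2_mult (m2_star U) X) U))"
proof -
  note u = m2_unitaryD[OF U]
  have "m2_mult (m2_mult (m2_star U) X) U
      = m2_mult (D 1) (m2_mult (m2_mult (m2_mult (m2_star U) X) U) (D 1))"
    by (subst X[symmetric], simp add: P m2_mult_assoc u m2_star_mult)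
  also have "\<dots> = D (e11 (m2_mult (m2_mult (m2_star U) X) U))"
    by (cases "m2_mult (m2_mult (m2_star U) X) U") simp
  finally show ?thesis .
qed

lemma conj_mult:
  assumes U: "m2_unitary U"
    and "m2_mult (m2_mult (m2_star U) X) U = D x"
    and "m2_mult (m2_mult (m2_star U) Y) U = D y"
  shows "m2_mult (m2_mult (m2_star U) (m2_mult X Y)) U = D (x * y)"
proof -
  note u = m2_unitaryD[OF U]
  have "m2_mult (m2_mult (m2_star U) (m2_mult X Y)) U
     = m2_mult (m2_mult (m2_mult (m2_star U) X) U) (m2_mult (m2_mult (m2_star U) Y) U)"
    by (simp add: m2_mult_assoc u)
  thus ?thesis using assms by simp
qed

lemma conj_star:
  assumes "m2_mult (m2_mult (m2_star U) X) U = D x"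
  shows "m2_mult (m2_mult (m2_star U) (m2_star X)) U = D (cstar x)"
proof -
  have "m2_star (m2_mult (m2_mult (m2_star U) X) U) = m2_mult (m2_mult (m2_star U) (m2_star X)) U"
    by (simp add: m2_star_mult m2_mult_assoc)
  thus ?thesis using assms by simp
qed

lemma diag_form:
  assumes A1: "m2_mult (m2_star X) X = D 1" and A2: "m2_mult X (m2_star X) = D (1::'a::cstar_algebra)"
  shows "X = D (e11 X)" "unitary (e11 X)"
proof -
  obtain a b c d where X: "X = M2 a b c d" by (cases X)
  have "m2_mult (m2_star X) (m2_mult (m2_mult X (m2_star X)) X) = m2_mult (m2_mult (m2_star X) X) (m2_mult (m2_star X) X)"
    by (simp add: m2_mult_assoc)
  hence 1: "m2_mult (m2_star X) (m2_mult (D 1) X) = D 1" by (simp only: A1 A2 DD mult_1)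
  have "m2_mult X (m2_mult (m2_mult (m2_star X) X) (m2_star X)) = m2_mult (m2_mult X (m2_star X)) (m2_mult X (m2_star X))"
    by (simp add: m2_mult_assoc)
  hence 2: "m2_mult X (m2_mult (D 1) (m2_star X)) = D 1" by (simp only: A1 A2 DD mult_1)
  have "cstar b * b = 0" using 1 by (simp add: X)
  hence b: "b = 0" by (rule cstar_self_zero)
  have "c * cstar c = 0" using 2 by (simp add: X)
  hence c: "c = 0" by (rule cstar_self_zero')
  have "cstar d * d = 0" using A1 by (simp add: X b c)
  hence "d = 0" by (rule cstar_self_zero)
  with b c show "X = D (e11 X)" by (simp add: X)
  show "unitary (e11 X)" using A1 A2 b c by (simp add: X unitary_def)
qed

lemma unitary_mult: "unitary x \<Longrightarrow> unitary y \<Longrightarrow> unitary (x * (y::'a::cstar_algebra))"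
  unfolding unitary_def by (simp add: cstar_mult mult.assoc ra)

lemma unitary_cstar: "unitary x \<Longrightarrow> unitary (cstar (x::'a::cstar_algebra))"
  unfolding unitary_def by (simp add: cstar_cstar)

lemma cont_flip:
  assumes "continuous_on {0..1} (g::real \<Rightarrow> 'b::topological_space)"
  shows "continuous_on {0..1} (\<lambda>t. g (1 - t))"
proof -
  have "continuous_on {0..1} (\<lambda>t::real. 1 - t)" by (intro continuous_intros)
  moreover have "(\<lambda>t::real. 1 - t) ` {0..1} \<subseteq> {0..1}" by auto
  ultimately show ?thesis using continuous_on_compose2[OF assms] by blast
qed

lemma homotopic_from_path:
  fixes g :: "real \<Rightarrow> 'a::cstar_algebra"
  assumes c: "continuous_on {0..1} g" and un: "\<forall>t\<in>{0..1}. unitary (g t)" and e: "g 1 = g 0 * v"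
  shows "homotopic_to_one v"
proof -
  have u0: "unitary (g 0)" using un by auto
  define gg where "gg = (\<lambda>s. cstar (g 0) * g (1 - s))"
  have "continuous_on {0..1} gg" unfolding gg_def by (intro continuous_intros cont_flip c)
  moreover have "\<forall>t\<in>{0..1}. unitary (gg t)"
    unfolding gg_def using un u0 by (auto intro!: unitary_mult unitary_cstar)
  moreover have "gg 0 = v" using u0 by (simp add: gg_def e mult.assoc[symmetric] unitary_def)
  moreover have "gg 1 = 1" using u0 by (simp add: gg_def unitary_def)
  ultimately show ?thesis unfolding homotopic_to_one_def by blast
qed

definition Kc :: "'a::cstar_algebra m2 \<Rightarrow> 'a \<Rightarrow> 'a m2" where
  "Kc W y = m2_mult (m2_mult (m2_star W) (D y)) W"

lemma Kc_facts:
  fixes W P :: "'a::cstar_algebra m2"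
  assumes A1: "m2_mult (m2_star W) W = P" and A2: "m2_mult W (m2_star W) = D 1"
    and PP: "m2_mult P P = P"
  shows "m2_mult (Kc W y) (Kc W z) = Kc W (y * z)"
    "m2_star (Kc W y) = Kc W (cstar y)"
    "m2_mult (m2_mult P (Kc W y)) P = Kc W y"
    "Kc W 1 = P" "Kc W 0 = m2_zero"
proof -
  show "m2_mult (Kc W y) (Kc W z) = Kc W (y * z)"
    by (simp add: Kc_def m2_mult_assoc ra2[OF A2] ra2[OF DD])
  show "m2_star (Kc W y) = Kc W (cstar y)"
    by (simp add: Kc_def m2_star_mult m2_mult_assoc)
  have PW: "m2_mult P (m2_star W) = m2_mult (m2_star W) (D 1)"
    by (simp add: A1[symmetric] m2_mult_assoc A2)
  have WP: "m2_mult W P = m2_mult (D 1) W"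
    by (simp add: A1[symmetric] m2_mult_assoc[symmetric] A2)
  show "m2_mult (m2_mult P (Kc W y)) P = Kc W y"
    by (simp add: Kc_def m2_mult_assoc ra2[OF PW] WP ra2[OF DD])
  have "Kc W 1 = m2_mult (m2_mult (m2_star W) W) (m2_mult (m2_star W) W)"
    by (simp add: Kc_def A2[symmetric] m2_mult_assoc)
  thus "Kc W 1 = P" by (simp add: A1 PP)
  show "Kc W 0 = m2_zero"
    by (cases W) (simp add: Kc_def m2_zero_def diag_def)
qed

lemma m2_cont_Kc: "m2_cont S w \<Longrightarrow> m2_cont S (\<lambda>t. Kc (w t) y)"
  unfolding Kc_def by (intro m2_cont_mult m2_cont_star m2_cont_const)

locale ctx47 =
  fixes v :: "'a::cstar_algebra" and u :: "real \<Rightarrow> 'a m2"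
  assumes vu: "unitary v" and uc: "m2_cont {0..1} u" and uu: "\<forall>t\<in>{0..1}. m2_unitary (u t)"
    and u0: "u 0 = m2_one" and u1: "u 1 = diag v 1"
begin

definition p where "p = (\<lambda>t. m2_mult (m2_mult (u t) (diag 1 0)) (m2_star (u t)))"

lemma pD: "p t = m2_mult (m2_mult (u t) (D 1)) (m2_star (u t))"
  by (simp add: p_def diag10)

lemma p_proj: "t \<in> {0..1} \<Longrightarrow> m2_mult (p t) (p t) = p t"
  using m2_unitaryD[of "u t"] uu by (simp add: pD m2_mult_assoc ra2[OF DD])

lemma i_ii: "homotopic_to_one v \<Longrightarrow> mvn_CT p (\<lambda>_. diag 1 0)"
proof -
  assume "homotopic_to_one v"
  then obtain g :: "real \<Rightarrow> 'a" where gc: "continuous_on {0..1} g" and gu: "\<forall>t\<in>{0..1}. unitary (g t)"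
    and g0: "g 0 = v" and g1: "g 1 = 1" unfolding homotopic_to_one_def by blast
  define w where "w = (\<lambda>t. m2_mult (D (g (1 - t))) (m2_star (u t)))"
  have "m2_cont {0..1} w" unfolding w_def
    by (intro m2_cont_mult m2_cont_star uc m2_cont_M2 continuous_on_const cont_flip[OF gc])
  moreover have "w 0 = w 1" using vu by (simp add: w_def g0 g1 u0 u1 diag_def unitary_def)
  moreover have "m2_mult (m2_star (w t)) (w t) = p t \<and> m2_mult (w t) (m2_star (w t)) = diag 1 0"
    if t: "t \<in> {0..1}" for t
  proof -
    have gt: "unitary (g (1 - t))" using gu t by auto
    have ut: "m2_unitary (u t)" using uu t by auto
    show ?thesis using gt m2_unitaryD[OF ut]
      by (simp add: w_def pD diag10 m2_star_mult m2_mult_assoc unitary_def ra2[OF DD])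
  qed
  ultimately show ?thesis unfolding mvn_CT_def in_CT_def by blast
qed

lemma ii_i: "mvn_CT p (\<lambda>_. diag 1 0) \<Longrightarrow> homotopic_to_one v"
proof -
  assume "mvn_CT p (\<lambda>_. diag 1 0)"
  then obtain w where wc: "m2_cont {0..1} w" and w01: "w 0 = w 1"
    and wp: "\<forall>t\<in>{0..1}. m2_mult (m2_star (w t)) (w t) = p t \<and> m2_mult (w t) (m2_star (w t)) = D 1"
    unfolding mvn_CT_def in_CT_def diag10 by blast
  define x where "x = (\<lambda>t. m2_mult (w t) (u t))"
  have xd: "x t = D (e11 (x t)) \<and> unitary (e11 (x t))" if t: "t \<in> {0..1}" for t
  proof -
    have ut: "m2_unitary (u t)" using uu t by auto
    note uD = m2_unitaryD[OF ut]
    have w1: "m2_mult (m2_star (w t)) (w t) = p t" and w2: "m2_mult (w t) (m2_star (w t)) = D 1"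
      using wp t by auto
    have a: "m2_mult (m2_star (x t)) (x t) = D 1"
      by (simp add: x_def m2_star_mult m2_mult_assoc ra2[OF w1] pD uD ra2[OF uD(1)] ra2[OF uD(2)] ra2[OF DD])
    have b: "m2_mult (x t) (m2_star (x t)) = D 1"
      by (simp add: x_def m2_star_mult m2_mult_assoc uD w2)
    show ?thesis using diag_form[OF a b] by simp
  qed
  define g where "g = (\<lambda>t. e11 (x t))"
  have gc: "continuous_on {0..1} g"
    using m2_cont_mult[OF wc uc] unfolding g_def x_def m2_cont_def by simp
  have x0: "x 0 = w 0" by (simp add: x_def u0)
  have "x 1 = m2_mult (x 0) (diag v 1)" by (simp add: x_def u0 u1 w01)
  also have "\<dots> = D (g 0 * v)"
  proof -
    have "x 0 = D (g 0)" using xd[of 0] by (simp add: g_def)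
    thus ?thesis by (simp add: diag_def)
  qed
  finally have "g 1 = g 0 * v" by (simp add: g_def)
  moreover have "\<forall>t\<in>{0..1}. unitary (g t)" using xd by (simp add: g_def)
  ultimately show ?thesis using homotopic_from_path[OF gc] by blast
qed

lemma ii_iii:
  assumes PI: "properly_infinite TYPE('a)" and M: "mvn_CT p (\<lambda>_. diag 1 0)"
  shows "properly_infinite_corner p"
proof -
  obtain e f :: 'a where ep: "is_proj e" and fp: "is_proj f" and ef: "e * f = 0"
    and me: "mvn e 1" and mf: "mvn f 1"
    using PI unfolding properly_infinite_def by blast
  obtain we where we1: "cstar we * we = e" and we2: "we * cstar we = 1" using me unfolding mvn_def by blast
  obtain wf where wf1: "cstar wf * wf = f" and wf2: "wf * cstar wf = 1" using mf unfolding mvn_def by blast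
  obtain w where wc: "m2_cont {0..1} w" and w01: "w 0 = w 1"
    and wp: "\<forall>t\<in>{0..1}. m2_mult (m2_star (w t)) (w t) = p t \<and> m2_mult (w t) (m2_star (w t)) = D 1"
    using M unfolding mvn_CT_def in_CT_def diag10 by blast
  have KF: "m2_mult (Kc (w t) y) (Kc (w t) z) = Kc (w t) (y * z)"
    "m2_star (Kc (w t) y) = Kc (w t) (cstar y)"
    "m2_mult (m2_mult (p t) (Kc (w t) y)) (p t) = Kc (w t) y"
    "Kc (w t) 1 = p t" "Kc (w t) 0 = m2_zero" if t: "t \<in> {0..1}" for t y z
    using Kc_facts[of "w t" "p t"] wp t p_proj[OF t] by auto
  have corner: "in_corner p (\<lambda>t. Kc (w t) y)" for y
    unfolding in_corner_def in_CT_def using KF(3) m2_cont_Kc[OF wc] w01 by auto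
  have ee: "cstar e = e" "e * e = e" using ep by (auto simp: is_proj_def)
  have ff: "cstar f = f" "f * f = f" using fp by (auto simp: is_proj_def)
  have pc: "proj_corner p (\<lambda>t. Kc (w t) e)" "proj_corner p (\<lambda>t. Kc (w t) f)"
    unfolding proj_corner_def using corner KF ee ff by auto
  have "\<forall>t\<in>{0..1}. m2_mult (Kc (w t) e) (Kc (w t) f) = m2_zero" using KF ef by auto
  moreover have "mvn_corner p (\<lambda>t. Kc (w t) e) p"
    unfolding mvn_corner_def
    by (rule exI[of _ "\<lambda>t. Kc (w t) we"]) (simp add: corner KF we1 we2)
  moreover have "mvn_corner p (\<lambda>t. Kc (w t) f) p"
    unfolding mvn_corner_def
    by (rule exI[of _ "\<lambda>t. Kc (w t) wf"]) (simp add: corner KF wf1 wf2)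
  ultimately show ?thesis unfolding properly_infinite_corner_def using pc by blast
qed

definition Tr :: "(real \<Rightarrow> 'a m2) \<Rightarrow> real \<Rightarrow> 'a" where
  "Tr X t = e11 (m2_mult (m2_mult (m2_star (u t)) (X t)) (u t))"

lemma conjD:
  assumes t: "t \<in> {0..1}" and X: "in_corner p X"
  shows "m2_mult (m2_mult (m2_star (u t)) (X t)) (u t) = D (Tr X t)"
proof -
  have ut: "m2_unitary (u t)" using uu t by auto
  have "m2_mult (m2_mult (p t) (X t)) (p t) = X t" using X t by (auto simp: in_corner_def)
  from corner_diag[OF ut this pD] show ?thesis by (simp add: Tr_def)
qed

lemma conj_p: "t \<in> {0..1} \<Longrightarrow> m2_mult (m2_mult (m2_star (u t)) (p t)) (u t) = D 1"
  using m2_unitaryD[of "u t"] uu by (simp add: pD m2_mult_assoc)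

lemma Tr_boundary:
  assumes X: "in_corner p X"
  shows "Tr X 1 = cstar v * Tr X 0 * v"
proof -
  have "X 0 = X 1" using X by (simp add: in_corner_def in_CT_def)
  thus ?thesis by (cases "X 1") (simp add: Tr_def u0 u1 diag_def mult.assoc)
qed

lemma cont_Tr: "in_corner p X \<Longrightarrow> continuous_on {0..1} (Tr X)"
proof -
  assume "in_corner p X"
  hence "m2_cont {0..1} X" by (simp add: in_corner_def in_CT_def)
  from m2_cont_mult[OF m2_cont_mult[OF m2_cont_star[OF uc] this] uc]
  show ?thesis unfolding Tr_def m2_cont_def by simp
qed

lemma iii_i:
  assumes PI: "properly_infinite TYPE('a)" and C: "properly_infinite_corner p"
  shows "homotopic_to_one v"
proof -
  obtain e f :: 'a where ep: "is_proj e" and fp: "is_proj f" and ef: "e * f = 0"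
    and me: "mvn e 1" and mf: "mvn f 1"
    using PI unfolding properly_infinite_def by blast
  obtain we where we1: "cstar we * we = e" and we2: "we * cstar we = 1" using me unfolding mvn_def by blast
  obtain wf where wf1: "cstar wf * wf = f" and wf2: "wf * cstar wf = 1" using mf unfolding mvn_def by blast
  define r1 where "r1 = cstar we"
  define r2 where "r2 = cstar wf"
  have R1: "cstar r1 * r1 = 1" "cstar r2 * r2 = 1" by (simp_all add: r1_def r2_def cstar_cstar we2 wf2)
  have "we * e = we" by (simp add: we1[symmetric] mult.assoc[symmetric] we2)
  moreover have "f * cstar wf = cstar wf" by (simp add: wf1[symmetric] mult.assoc wf2)
  ultimately have R12: "cstar r1 * r2 = 0"
    by (metis r1_def r2_def cstar_cstar ef mult.assoc mult_zero_left mult_zero_right)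
  obtain E F where EP: "proj_corner p E" and FP: "proj_corner p F"
    and EF: "\<forall>t\<in>{0..1}. m2_mult (E t) (F t) = m2_zero"
    and mE: "mvn_corner p E p" and mF: "mvn_corner p F p"
    using C unfolding properly_infinite_corner_def by blast
  obtain WE where WEc: "in_corner p WE" and WE: "\<forall>t\<in>{0..1}. m2_mult (m2_star (WE t)) (WE t) = E t
      \<and> m2_mult (WE t) (m2_star (WE t)) = p t" using mE unfolding mvn_corner_def by blast
  obtain WF where WFc: "in_corner p WF" and WF: "\<forall>t\<in>{0..1}. m2_mult (m2_star (WF t)) (WF t) = F t
      \<and> m2_mult (WF t) (m2_star (WF t)) = p t" using mF unfolding mvn_corner_def by blast
  have Ec: "in_corner p E" and Fc: "in_corner p F" using EP FP by (auto simp: proj_corner_def)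
  define s1 where "s1 = (\<lambda>t. cstar (Tr WE t))"
  define s2 where "s2 = (\<lambda>t. cstar (Tr WF t))"
  have S: "cstar (s1 t) * s1 t = 1 \<and> cstar (s2 t) * s2 t = 1 \<and> cstar (s1 t) * s2 t = 0"
    if t: "t \<in> {0..1}" for t
  proof -
    have ut: "m2_unitary (u t)" using uu t by auto
    note cE = conjD[OF t WEc] and cF = conjD[OF t WFc]
    have a1: "Tr WE t * cstar (Tr WE t) = 1"
      using conj_mult[OF ut cE conj_star[OF cE]] WE t conj_p[OF t] by auto
    have a2: "Tr WF t * cstar (Tr WF t) = 1"
      using conj_mult[OF ut cF conj_star[OF cF]] WF t conj_p[OF t] by auto
    have b1: "cstar (Tr WE t) * Tr WE t = Tr E t"
      using conj_mult[OF ut conj_star[OF cE] cE] WE t conjD[OF t Ec] by auto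
    have b2: "cstar (Tr WF t) * Tr WF t = Tr F t"
      using conj_mult[OF ut conj_star[OF cF] cF] WF t conjD[OF t Fc] by auto
    have "D (Tr E t * Tr F t) = D 0"
      using conj_mult[OF ut conjD[OF t Ec] conjD[OF t Fc]] EF t
      by (cases "u t") (auto simp: m2_zero_def diag_def)
    hence c: "Tr E t * Tr F t = 0" by simp
    have "Tr WE t * cstar (Tr WF t) = Tr WE t * (cstar (Tr WE t) * Tr WE t) * (cstar (Tr WF t) * Tr WF t) * cstar (Tr WF t)"
    proof -
      have q1: "Tr WE t * (cstar (Tr WE t) * Tr WE t) = Tr WE t" by (simp add: mult.assoc[symmetric] a1)
      have q2: "(cstar (Tr WF t) * Tr WF t) * cstar (Tr WF t) = cstar (Tr WF t)" by (simp add: mult.assoc a2)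
      have "Tr WE t * (cstar (Tr WE t) * Tr WE t) * (cstar (Tr WF t) * Tr WF t) * cstar (Tr WF t)
        = (Tr WE t * (cstar (Tr WE t) * Tr WE t)) * ((cstar (Tr WF t) * Tr WF t) * cstar (Tr WF t))"
        by (simp only: mult.assoc)
      thus ?thesis by (simp only: q1 q2)
    qed
    also have "\<dots> = 0" by (simp add: b1 b2 mult.assoc ra[OF c])
    finally show ?thesis by (simp add: s1_def s2_def cstar_cstar a1 a2)
  qed
  define Wt where "Wt = (\<lambda>t. Wf (e11 (u t)) (e12 (u t)) (e21 (u t)) (e22 (u t)) (s1 t) (s2 t) r1 r2)"
  have Wu: "unitary (Wt t)" if t: "t \<in> {0..1}" for t
  proof -
    obtain a b c d where ut: "u t = M2 a b c d" by (cases "u t")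
    have "m2_unitary (M2 a b c d)" using uu t unfolding ut[symmetric] by blast
    note U = m2_unitary_entries[OF this]
    show ?thesis unfolding Wt_def ut m2.sel
      by (rule Wf_unitary[OF U(1) U(2) U(3) U(4) U(5) U(6)]) (use S[OF t] R1 R12 in auto)
  qed
  have cu: "continuous_on {0..1} (\<lambda>t. e11 (u t))" "continuous_on {0..1} (\<lambda>t. e12 (u t))"
    "continuous_on {0..1} (\<lambda>t. e21 (u t))" "continuous_on {0..1} (\<lambda>t. e22 (u t))"
    using uc by (auto simp: m2_cont_def)
  have cs: "continuous_on {0..1} s1" "continuous_on {0..1} s2"
    unfolding s1_def s2_def by (intro continuous_on_cstar cont_Tr WEc WFc)+
  have Wc: "continuous_on {0..1} Wt"
    unfolding Wt_def Wf_def Let_def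
    by (intro continuous_intros cu cs)
  have "s1 1 = cstar v * s1 0 * v" "s2 1 = cstar v * s2 0 * v"
    by (simp_all add: s1_def s2_def Tr_boundary[OF WEc] Tr_boundary[OF WFc] cstar_mult cstar_cstar mult.assoc)
  hence "Wt 1 = Wt 0 * v"
    using Wf_boundary[of v "s1 0" "s2 0" r1 r2] vu
    by (simp add: Wt_def u0 u1 diag_def m2_one_def unitary_def)
  from homotopic_from_path[OF Wc _ this] Wu show ?thesis by blast
qed

end

theorem proposition4p7:
  fixes v :: "'a::cstar_algebra" and u :: "real \<Rightarrow> 'a m2"
  defines "p \<equiv> (\<lambda>t. m2_mult (m2_mult (u t) (diag 1 0)) (m2_star (u t)))"
  assumes "unitary v"
    and "m2_cont {0..1} u"
    and "\<forall>t\<in>{0..1}. m2_unitary (u t)"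
    and "u 0 = m2_one"
    and "u 1 = diag v 1"
  shows "(homotopic_to_one v \<longleftrightarrow> mvn_CT p (\<lambda>_. diag 1 0))
     \<and> (properly_infinite TYPE('a) \<longrightarrow>
          ((homotopic_to_one v \<longleftrightarrow> mvn_CT p (\<lambda>_. diag 1 0))
           \<and> (mvn_CT p (\<lambda>_. diag 1 0) \<longleftrightarrow> properly_infinite_corner p)))"
proof -
  interpret X: ctx47 v u by unfold_locales (use assms in auto)
  have peq: "p = X.p" by (simp add: p_def X.p_def)
  have eq: "homotopic_to_one v \<longleftrightarrow> mvn_CT p (\<lambda>_. diag 1 0)"
    unfolding peq using X.i_ii X.ii_i by blast
  moreover have "properly_infinite TYPE('a) \<Longrightarrow> (mvn_CT p (\<lambda>_. diag 1 0) \<longleftrightarrow> properly_infinite_corner p)"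
    unfolding peq using X.ii_iii X.iii_i X.i_ii by blast
  ultimately show ?thesis by blast
qed

end
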